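(* Let $G$ be a countably infinite discrete group with enumeration $\{g_n\}_{n\in\mathbb{N}}$, let $\pi$ be a unitary representation of $G$ on an infinite dimensional Hilbert space, and let $(H,\pi)$ be a model of $IHS_\pi$. Put $U_n=\pi(g_n)$ and let $\mathcal{A}$ be the $C^*$-algebra generated by $\{U_n\}_{n\in\mathbb{N}}$ (the operator-norm closure of the $*$-algebra they generate). Then every operator in $\mathcal{A}$ is definable in the language $\mathcal{L}_\pi$.
   Context: Hilbert spaces are metric structures in continuous logic in the language $\mathcal{L}=\{0,-,\dot 2,\frac{x+y}{2}, e^{i\theta}:\theta\in 2\pi\mathbb{Q}\}$; $\mathcal{L}_\pi=\mathcal{L}\cup\{\pi(g):g\in G\}$ with each $\pi(g)$ a unary function symbol interpreted as the unitary $\pi(g)$; $IHS_\pi$ is the complete $\mathcal{L}_\pi$-theory of the given representation. *)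

theory Defs
  imports "HOL-Analysis.Analysis" "HOL-Library.Countable"
begin

text \<open>A complex Hilbert space is represented as a real Hilbert space
(class real_inner + complete_space) together with a map J (multiplication by i)
which is real-linear, satisfies J (J x) = - x and preserves the real inner product.\<close>

definition complex_structure :: "('h::real_inner \<Rightarrow> 'h) \<Rightarrow> bool" where
  "complex_structure J \<longleftrightarrow> linear J \<and> (\<forall>x. J (J x) = - x) \<and>
     (\<forall>x y. inner (J x) (J y) = inner x y)"

definition cscale :: "('h::real_vector \<Rightarrow> 'h) \<Rightarrow> complex \<Rightarrow> 'h \<Rightarrow> 'h" where
  "cscale J c x = Re c *\<^sub>R x + Im c *\<^sub>R J x"

text \<open>Unitary representation of a group (written additively, as the type class
group_add; not assumed commutative) on the complex Hilbert space (h, J).\<close>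

definition unitary_rep :: "('h::real_normed_vector \<Rightarrow> 'h) \<Rightarrow> ('g::group_add \<Rightarrow> 'h \<Rightarrow> 'h) \<Rightarrow> bool" where
  "unitary_rep J \<pi> \<longleftrightarrow> \<pi> 0 = id \<and> (\<forall>a b. \<pi> (a + b) = \<pi> a \<circ> \<pi> b) \<and>
     (\<forall>h. linear (\<pi> h) \<and> (\<forall>x. \<pi> h (J x) = J (\<pi> h x)) \<and>
          (\<forall>x. norm (\<pi> h x) = norm x) \<and> surj (\<pi> h))"

definition infinite_dimensional :: "'h::real_vector itself \<Rightarrow> bool" where
  "infinite_dimensional _ \<longleftrightarrow> \<not> (\<exists>B::'h set. finite B \<and> span B = UNIV)"

datatype 'g trm = Var nat | Zero | Neg "'g trm" | Dbl "'g trm" | Mid "'g trm" "'g trm"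
  | Rot rat "'g trm" | Act 'g "'g trm"

text \<open>Formulas: atomic d(t,u); unary and binary continuous connectives
(which generate all continuous connectives up to uniform approximation);
sup / inf of a variable over the ball of radius r (the sorts of the
many-sorted Hilbert space structure are the balls of radius r).\<close>

datatype 'g fml = Dist "'g trm" "'g trm"
  | Conn1 "real \<Rightarrow> real" "'g fml"
  | Conn2 "real \<Rightarrow> real \<Rightarrow> real" "'g fml" "'g fml"
  | SupB nat nat "'g fml"
  | InfB nat nat "'g fml"

fun tfv :: "'g trm \<Rightarrow> nat set" where
  "tfv (Var n) = {n}"
| "tfv Zero = {}"
| "tfv (Neg t) = tfv t"
| "tfv (Dbl t) = tfv t"
| "tfv (Mid t u) = tfv t \<union> tfv u"
| "tfv (Rot q t) = tfv t"
| "tfv (Act g t) = tfv t"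

fun ffv :: "'g fml \<Rightarrow> nat set" where
  "ffv (Dist t u) = tfv t \<union> tfv u"
| "ffv (Conn1 f \<phi>) = ffv \<phi>"
| "ffv (Conn2 f \<phi> \<psi>) = ffv \<phi> \<union> ffv \<psi>"
| "ffv (SupB i r \<phi>) = ffv \<phi> - {i}"
| "ffv (InfB i r \<phi>) = ffv \<phi> - {i}"

fun wf_fml :: "'g fml \<Rightarrow> bool" where
  "wf_fml (Dist t u) = True"
| "wf_fml (Conn1 f \<phi>) = (continuous_on UNIV f \<and> wf_fml \<phi>)"
| "wf_fml (Conn2 f \<phi> \<psi>) = (continuous_on UNIV (\<lambda>p. f (fst p) (snd p)) \<and> wf_fml \<phi> \<and> wf_fml \<psi>)"
| "wf_fml (SupB i r \<phi>) = wf_fml \<phi>"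
| "wf_fml (InfB i r \<phi>) = wf_fml \<phi>"

definition sentence :: "'g fml \<Rightarrow> bool" where
  "sentence \<phi> \<longleftrightarrow> wf_fml \<phi> \<and> ffv \<phi> = {}"

fun teval :: "('h::real_vector \<Rightarrow> 'h) \<Rightarrow> ('g \<Rightarrow> 'h \<Rightarrow> 'h) \<Rightarrow> (nat \<Rightarrow> 'h) \<Rightarrow> 'g trm \<Rightarrow> 'h" where
  "teval J \<pi> a (Var n) = a n"
| "teval J \<pi> a Zero = 0"
| "teval J \<pi> a (Neg t) = - teval J \<pi> a t"
| "teval J \<pi> a (Dbl t) = 2 *\<^sub>R teval J \<pi> a t"
| "teval J \<pi> a (Mid t u) = (1/2) *\<^sub>R (teval J \<pi> a t + teval J \<pi> a u)"
| "teval J \<pi> a (Rot q t) = cscale J (cis (2 * pi * real_of_rat q)) (teval J \<pi> a t)"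
| "teval J \<pi> a (Act g t) = \<pi> g (teval J \<pi> a t)"

fun feval :: "('h::real_normed_vector \<Rightarrow> 'h) \<Rightarrow> ('g \<Rightarrow> 'h \<Rightarrow> 'h) \<Rightarrow> (nat \<Rightarrow> 'h) \<Rightarrow> 'g fml \<Rightarrow> real" where
  "feval J \<pi> a (Dist t u) = dist (teval J \<pi> a t) (teval J \<pi> a u)"
| "feval J \<pi> a (Conn1 f \<phi>) = f (feval J \<pi> a \<phi>)"
| "feval J \<pi> a (Conn2 f \<phi> \<psi>) = f (feval J \<pi> a \<phi>) (feval J \<pi> a \<psi>)"
| "feval J \<pi> a (SupB i r \<phi>) = (SUP x\<in>cball 0 (real r). feval J \<pi> (a(i := x)) \<phi>)"
| "feval J \<pi> a (InfB i r \<phi>) = (INF x\<in>cball 0 (real r). feval J \<pi> (a(i := x)) \<phi>)"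

text \<open>(H, pi) is a model of IHS_pi0, the complete theory of (H0, pi0):
every sentence with value 0 in (H0, pi0) has value 0 in (H, pi).\<close>

definition models_theory_of ::
  "('b::real_normed_vector \<Rightarrow> 'b) \<Rightarrow> ('g \<Rightarrow> 'b \<Rightarrow> 'b) \<Rightarrow>
   ('a::real_normed_vector \<Rightarrow> 'a) \<Rightarrow> ('g \<Rightarrow> 'a \<Rightarrow> 'a) \<Rightarrow> bool" where
  "models_theory_of J \<pi> J0 \<pi>0 \<longleftrightarrow>
     (\<forall>\<phi>. sentence \<phi> \<longrightarrow> (\<forall>a0. feval J0 \<pi>0 a0 \<phi> = 0) \<longrightarrow> (\<forall>a. feval J \<pi> a \<phi> = 0))"

text \<open>Definable function (over the empty set): on each ball of radius r it maps
into some ball of radius s, and the predicate d(T x, y) on ball_r x ball_s is a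
uniform limit of L_pi-formulas in the variables 0 and 1.\<close>

definition definable_fun :: "('h::real_normed_vector \<Rightarrow> 'h) \<Rightarrow> ('g \<Rightarrow> 'h \<Rightarrow> 'h) \<Rightarrow> ('h \<Rightarrow> 'h) \<Rightarrow> bool" where
  "definable_fun J \<pi> T \<longleftrightarrow>
     (\<forall>r::nat. \<exists>s::nat. T ` cball 0 (real r) \<subseteq> cball 0 (real s) \<and>
        (\<forall>\<epsilon>>0. \<exists>\<phi>. wf_fml \<phi> \<and> ffv \<phi> \<subseteq> {0, 1} \<and>
           (\<forall>x\<in>cball 0 (real r). \<forall>y\<in>cball 0 (real s). \<forall>a.
              \<bar>feval J \<pi> (a(0 := x, 1 := y)) \<phi> - dist (T x) y\<bar> < \<epsilon>)))"

inductive_set star_alg :: "('h::real_inner \<Rightarrow> 'h) \<Rightarrow> (nat \<Rightarrow> 'h \<Rightarrow> 'h) \<Rightarrow> ('h \<Rightarrow> 'h) set"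
  for J :: "'h \<Rightarrow> 'h" and U :: "nat \<Rightarrow> 'h \<Rightarrow> 'h" where
  gen: "U n \<in> star_alg J U"
| add: "T \<in> star_alg J U \<Longrightarrow> S \<in> star_alg J U \<Longrightarrow> (\<lambda>x. T x + S x) \<in> star_alg J U"
| scal: "T \<in> star_alg J U \<Longrightarrow> (\<lambda>x. cscale J c (T x)) \<in> star_alg J U"
| comp: "T \<in> star_alg J U \<Longrightarrow> S \<in> star_alg J U \<Longrightarrow> T \<circ> S \<in> star_alg J U"
| adj: "T \<in> star_alg J U \<Longrightarrow> (\<forall>x y. inner (T x) y = inner x (S y)) \<Longrightarrow> S \<in> star_alg J U"

definition cstar_alg :: "('h::real_inner \<Rightarrow> 'h) \<Rightarrow> (nat \<Rightarrow> 'h \<Rightarrow> 'h) \<Rightarrow> ('h \<Rightarrow> 'h) set" where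
  "cstar_alg J U = {T. bounded_linear T \<and>
     (\<forall>\<epsilon>>0. \<exists>S\<in>star_alg J U. onorm (\<lambda>x. T x - S x) < \<epsilon>)}"

end

theory Submission
  imports Defs
begin


lemma cs_lin: "complex_structure J \<Longrightarrow> linear J" by (simp add: complex_structure_def)
lemma cs_JJ: "complex_structure J \<Longrightarrow> J (J x) = - x" by (simp add: complex_structure_def)
lemma cs_inner: "complex_structure J \<Longrightarrow> inner (J x) (J y) = inner x y" by (simp add: complex_structure_def)

lemma cs_norm: "complex_structure J \<Longrightarrow> norm (J x) = norm x"
  by (simp add: norm_eq_sqrt_inner cs_inner)

lemma cs_inner_J: assumes "complex_structure J" shows "inner (J x) y = - inner x (J y)"
proof -
  have "inner (J x) y = inner (J (J x)) (J y)" using cs_inner[OF assms] by simp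
  also have "\<dots> = - inner x (J y)" using cs_JJ[OF assms] by simp
  finally show ?thesis .
qed

lemma cscale_add: assumes "complex_structure J"
  shows "cscale J c (x + y) = cscale J c x + cscale J c y"
  using linear_add[OF cs_lin[OF assms]] by (simp add: cscale_def algebra_simps)

lemma cscale_zero: assumes "complex_structure J" shows "cscale J c 0 = 0"
  using linear_0[OF cs_lin[OF assms]] by (simp add: cscale_def)

lemma cscale_scaleR: assumes "complex_structure J"
  shows "cscale J c (r *\<^sub>R x) = r *\<^sub>R cscale J c x"
  using linear_scale[OF cs_lin[OF assms]] by (simp add: cscale_def algebra_simps)

lemma cscale_mult: assumes "complex_structure J"
  shows "cscale J c (cscale J d x) = cscale J (c * d) x"
  using linear_add[OF cs_lin[OF assms]] linear_scale[OF cs_lin[OF assms]] cs_JJ[OF assms]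
  by (simp add: cscale_def algebra_simps)

lemma cscale_one: "cscale J 1 x = x" by (simp add: cscale_def)

lemma cscale_inner: assumes "complex_structure J"
  shows "inner (cscale J c x) y = inner x (cscale J (cnj c) y)"
  using cs_inner_J[OF assms] by (simp add: cscale_def inner_add_left inner_add_right inner_diff_right)

locale goodrep =
  fixes J :: "'h::real_inner \<Rightarrow> 'h" and \<pi> :: "'g::group_add \<Rightarrow> 'h \<Rightarrow> 'h"
  assumes cs: "complex_structure J"
  and ip: "\<And>h x y. inner (\<pi> h x) (\<pi> h y) = inner x y"
  and hom: "\<And>h k x. \<pi> (h + k) x = \<pi> h (\<pi> k x)"
  and zer: "\<And>x. \<pi> 0 x = x"
  and jc: "\<And>h x. \<pi> h (J x) = J (\<pi> h x)"
begin

lemma pnorm: "norm (\<pi> h x) = norm x"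
  by (simp add: norm_eq_sqrt_inner ip)

lemma plin: "linear (\<pi> h)"
proof (rule linearI)
  fix x y
  have "inner (\<pi> h (x+y) - \<pi> h x - \<pi> h y) (\<pi> h (x+y) - \<pi> h x - \<pi> h y)
      = inner ((x+y) - x - y) ((x+y) - x - y)"
    unfolding inner_diff_left inner_diff_right ip by simp
  then have "\<pi> h (x+y) - \<pi> h x - \<pi> h y = 0" by simp
  then show "\<pi> h (x + y) = \<pi> h x + \<pi> h y" by (simp add: algebra_simps)
next
  fix r x
  have "inner (\<pi> h (r *\<^sub>R x) - r *\<^sub>R \<pi> h x) (\<pi> h (r *\<^sub>R x) - r *\<^sub>R \<pi> h x)
      = inner (r *\<^sub>R x - r *\<^sub>R x) (r *\<^sub>R x - r *\<^sub>R x)"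
    unfolding inner_diff_left inner_diff_right inner_scaleR_left inner_scaleR_right ip by simp
  then show "\<pi> h (r *\<^sub>R x) = r *\<^sub>R \<pi> h x" by simp
qed

lemma pcscale: "\<pi> h (cscale J c x) = cscale J c (\<pi> h x)"
  using linear_add[OF plin] linear_scale[OF plin] jc by (simp add: cscale_def)

definition ev :: "(complex \<times> 'g) list \<Rightarrow> 'h \<Rightarrow> 'h" where
  "ev L x = (\<Sum>p\<leftarrow>L. cscale J (fst p) (\<pi> (snd p) x))"

lemma ev_Nil[simp]: "ev [] x = 0" by (simp add: ev_def)
lemma ev_Cons[simp]: "ev (p # L) x = cscale J (fst p) (\<pi> (snd p) x) + ev L x" by (simp add: ev_def)
lemma ev_append: "ev (L1 @ L2) x = ev L1 x + ev L2 x" by (simp add: ev_def)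

lemma ev_gen: "ev [(1, h)] = \<pi> h" by (rule ext) (simp add: cscale_one)

lemma ev_scal: "ev (map (\<lambda>p. (d * fst p, snd p)) L) x = cscale J d (ev L x)"
  by (induction L) (simp_all add: cscale_zero[OF cs] cscale_add[OF cs] cscale_mult[OF cs])

lemma ev_comp1: "cscale J c (\<pi> h (ev L2 x)) = ev (map (\<lambda>q. (c * fst q, h + snd q)) L2) x"
  by (induction L2) (simp_all add: linear_0[OF plin] linear_add[OF plin] cscale_zero[OF cs]
      cscale_add[OF cs] cscale_mult[OF cs] pcscale hom)

lemma ev_comp: "ev (concat (map (\<lambda>p. map (\<lambda>q. (fst p * fst q, snd p + snd q)) L2) L1)) x
   = ev L1 (ev L2 x)"
  by (induction L1) (simp_all add: ev_append ev_comp1)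

lemma ev_adj: "inner (ev L x) y = inner x (ev (map (\<lambda>p. (cnj (fst p), - snd p)) L) y)"
proof (induction L)
  case Nil then show ?case by simp
next
  case (Cons p L)
  have "inner (cscale J (fst p) (\<pi> (snd p) x)) y
      = inner (\<pi> (snd p) x) (\<pi> (snd p) (\<pi> (- snd p) (cscale J (cnj (fst p)) y)))"
    by (simp add: cscale_inner[OF cs] hom[symmetric] zer)
  also have "\<dots> = inner x (cscale J (cnj (fst p)) (\<pi> (- snd p) y))"
    unfolding ip by (simp add: pcscale)
  finally show ?case using Cons by (simp add: inner_add_left inner_add_right)
qed

lemma ev_bl: "bounded_linear (ev L)"
proof (induction L)
  case Nil then show ?case by (simp add: bounded_linear_zero[unfolded ev_Nil] ev_def)
next
  case (Cons p L)
  have "bounded_linear (\<lambda>x. cscale J (fst p) (\<pi> (snd p) x))"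
  proof (rule bounded_linear_intro[where K="\<bar>Re (fst p)\<bar> + \<bar>Im (fst p)\<bar>"])
    fix x y show "cscale J (fst p) (\<pi> (snd p) (x + y)) = cscale J (fst p) (\<pi> (snd p) x) + cscale J (fst p) (\<pi> (snd p) y)"
      by (simp add: linear_add[OF plin] cscale_add[OF cs])
  next
    fix r x show "cscale J (fst p) (\<pi> (snd p) (r *\<^sub>R x)) = r *\<^sub>R cscale J (fst p) (\<pi> (snd p) x)"
      by (simp add: linear_scale[OF plin] cscale_scaleR[OF cs])
  next
    fix x
    have "norm (cscale J (fst p) (\<pi> (snd p) x)) \<le> norm (Re (fst p) *\<^sub>R \<pi> (snd p) x) + norm (Im (fst p) *\<^sub>R J (\<pi> (snd p) x))"
      unfolding cscale_def by (rule norm_triangle_ineq)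
    also have "\<dots> = norm x * (\<bar>Re (fst p)\<bar> + \<bar>Im (fst p)\<bar>)"
      by (simp add: cs_norm[OF cs] pnorm algebra_simps)
    finally show "norm (cscale J (fst p) (\<pi> (snd p) x)) \<le> norm x * (\<bar>Re (fst p)\<bar> + \<bar>Im (fst p)\<bar>)" .
  qed
  then have "bounded_linear (\<lambda>x. cscale J (fst p) (\<pi> (snd p) x) + ev L x)"
    using Cons by (intro bounded_linear_add) auto
  then show ?case by (simp add: ev_Cons[abs_def])
qed

lemma star_ev: "S \<in> star_alg J (\<lambda>n. \<pi> (g n)) \<Longrightarrow> \<exists>L. S = ev L"
proof (induction rule: star_alg.induct)
  case (gen n) then show ?case using ev_gen by metis
next
  case (add T S)
  then obtain L1 L2 where "T = ev L1" "S = ev L2" by blast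
  then show ?case by (intro exI[of _ "L1 @ L2"]) (simp add: ev_append[abs_def])
next
  case (scal T c)
  then obtain L where "T = ev L" by blast
  then show ?case by (intro exI[of _ "map (\<lambda>p. (c * fst p, snd p)) L"]) (simp add: ev_scal[abs_def])
next
  case (comp T S)
  then obtain L1 L2 where "T = ev L1" "S = ev L2" by blast
  then show ?case by (intro exI[of _ "concat (map (\<lambda>p. map (\<lambda>q. (fst p * fst q, snd p + snd q)) L2) L1)"])
      (simp add: ev_comp[abs_def] o_def)
next
  case (adj T S)
  then obtain L where L: "T = ev L" by blast
  define L' where "L' = map (\<lambda>p. (cnj (fst p), - snd p)) L"
  have "S = ev L'"
  proof
    fix y
    let ?d = "S y - ev L' y"
    have "inner ?d ?d = 0"
      using adj(2)[rule_format, of ?d y] ev_adj[of L ?d y] L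
      by (simp add: L'_def inner_diff_right)
    then show "S y = ev L' y" by simp
  qed
  then show ?case by blast
qed

end


fun halfk :: "nat \<Rightarrow> 'g trm \<Rightarrow> 'g trm" where
  "halfk 0 t = t" | "halfk (Suc k) t = Mid (halfk k t) Zero"
fun nmul :: "nat \<Rightarrow> 'g trm \<Rightarrow> 'g trm" where
  "nmul 0 t = Zero" | "nmul (Suc n) t = Dbl (Mid t (nmul n t))"
definition imul :: "int \<Rightarrow> 'g trm \<Rightarrow> 'g trm" where
  "imul m t = (if 0 \<le> m then nmul (nat m) t else Neg (nmul (nat (- m)) t))"

lemma halfk_ev: "teval J \<pi> A (halfk k t) = ((1/2)^k) *\<^sub>R teval J \<pi> A t"
  by (induction k) auto
lemma nmul_ev: "teval J \<pi> A (nmul n t) = real n *\<^sub>R teval J \<pi> A t"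
  by (induction n) (auto simp: algebra_simps)
lemma imul_ev: "teval J \<pi> A (imul m t) = of_int m *\<^sub>R teval J \<pi> A t"
  by (auto simp: imul_def nmul_ev)
lemma halfk_fv: "tfv (halfk k t) = tfv t" by (induction k) auto
lemma nmul_fv: "tfv (nmul n t) \<subseteq> tfv t" by (induction n) auto
lemma imul_fv: "tfv (imul m t) \<subseteq> tfv t" by (auto simp: imul_def dest: nmul_fv[THEN subsetD])

lemma rot_quarter: "cscale J (cis (2 * pi * real_of_rat (1/4))) v = J v"
proof -
  have h: "2 * pi * real_of_rat (1/4) = pi/2" by (simp add: of_rat_divide)
  show ?thesis unfolding cscale_def cis.simps h by simp
qed

lemma real_scale_approx:
  fixes R :: real assumes "\<epsilon> > 0" "R \<ge> 0"
  shows "\<exists>k m. \<forall>v::'h::real_normed_vector. norm v \<le> R \<longrightarrow>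
     norm (a *\<^sub>R v - (of_int m * (1/2)^k) *\<^sub>R v) < \<epsilon>"
proof -
  obtain k where k: "(1/2::real)^k < \<epsilon> / (R+1)"
    using real_arch_pow_inv[of "\<epsilon> / (R+1)" "1/2"] assms by auto
  define m where "m = \<lfloor>a * 2^k\<rfloor>"
  have e: "\<bar>a - of_int m * (1/2)^k\<bar> \<le> (1/2)^k"
  proof -
    define d where "d = a * 2^k - of_int m"
    have d: "0 \<le> d" "d \<le> 1" unfolding m_def d_def by linarith+
    have eq: "a - of_int m * (1/2)^k = d / 2^k" by (simp add: d_def field_simps power_one_over)
    have "d / 2^k \<le> 1 / 2^k" using d by (simp add: divide_right_mono)
    then show ?thesis using d unfolding eq by (simp add: power_one_over)
  qed
  show ?thesis
  proof (intro exI allI impI)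
    fix v :: 'h assume v: "norm v \<le> R"
    have "norm (a *\<^sub>R v - (of_int m * (1/2)^k) *\<^sub>R v) = \<bar>a - of_int m * (1/2)^k\<bar> * norm v"
      by (simp flip: scaleR_diff_left)
    also have "\<dots> \<le> (1/2)^k * (R+1)"
      using e v by (intro mult_mono) auto
    also have "\<dots> < \<epsilon>" using k assms by (simp add: field_simps)
    finally show "norm (a *\<^sub>R v - (of_int m * (1/2)^k) *\<^sub>R v) < \<epsilon>" .
  qed
qed

context goodrep begin

lemma term_approx:
  assumes "\<epsilon> > 0" "R \<ge> 0"
  shows "\<exists>t. tfv t \<subseteq> {0} \<and> (\<forall>A. norm (A 0) \<le> R \<longrightarrow> norm (ev L (A 0) - teval J \<pi> A t) < \<epsilon>)"
  using assms(1)
proof (induction L arbitrary: \<epsilon>)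
  case Nil then show ?case by (intro exI[of _ Zero]) auto
next
  case (Cons p L)
  obtain t1 where t1: "tfv t1 \<subseteq> {0}" "\<And>A. norm (A 0) \<le> R \<Longrightarrow> norm (ev L (A 0) - teval J \<pi> A t1) < \<epsilon>/2"
    using Cons(1)[of "\<epsilon>/2"] Cons(2) by auto
  obtain k1 m1 where km1: "\<And>v::'h. norm v \<le> R \<Longrightarrow> norm (Re (fst p) *\<^sub>R v - (of_int m1 * (1/2)^k1) *\<^sub>R v) < \<epsilon>/4"
    using real_scale_approx[of "\<epsilon>/4" R "Re (fst p)"] Cons(2) assms(2) by auto
  obtain k2 m2 where km2: "\<And>v::'h. norm v \<le> R \<Longrightarrow> norm (Im (fst p) *\<^sub>R v - (of_int m2 * (1/2)^k2) *\<^sub>R v) < \<epsilon>/4"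
    using real_scale_approx[of "\<epsilon>/4" R "Im (fst p)"] Cons(2) assms(2) by auto
  define u where "u = Act (snd p) (Var 0 :: 'g trm)"
  define tc where "tc = Dbl (Mid (imul m1 (halfk k1 u)) (imul m2 (halfk k2 (Rot (1/4) u))))"
  define t where "t = Dbl (Mid tc t1)"
  have fv: "tfv t \<subseteq> {0}" using t1(1) imul_fv[of m1 "halfk k1 u"] imul_fv[of m2 "halfk k2 (Rot (1/4) u)"]
    by (auto simp: t_def tc_def u_def halfk_fv)
  have "norm (ev (p # L) (A 0) - teval J \<pi> A t) < \<epsilon>" if A: "norm (A 0) \<le> R" for A
  proof -
    let ?v = "\<pi> (snd p) (A 0)"
    have nv: "norm ?v \<le> R" "norm (J ?v) \<le> R" using A by (simp_all add: pnorm cs_norm[OF cs])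
    have tce: "teval J \<pi> A tc = (of_int m1 * (1/2)^k1) *\<^sub>R ?v + (of_int m2 * (1/2)^k2) *\<^sub>R J ?v"
      by (simp add: tc_def u_def imul_ev halfk_ev rot_quarter)
    have te: "teval J \<pi> A t = teval J \<pi> A tc + teval J \<pi> A t1" by (simp add: t_def)
    have "ev (p # L) (A 0) - teval J \<pi> A t =
       (Re (fst p) *\<^sub>R ?v - (of_int m1 * (1/2)^k1) *\<^sub>R ?v) + (Im (fst p) *\<^sub>R J ?v - (of_int m2 * (1/2)^k2) *\<^sub>R J ?v)
       + (ev L (A 0) - teval J \<pi> A t1)"
      by (simp add: te tce cscale_def algebra_simps)
    also have "norm \<dots> < \<epsilon>/4 + \<epsilon>/4 + \<epsilon>/2"
      using km1[OF nv(1)] km2[OF nv(2)] t1(2)[of A, OF A]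
      by (smt (verit) norm_triangle_ineq)
    finally show ?thesis by simp
  qed
  then show ?case using fv by blast
qed

end

lemma transfer:
  assumes M: "models_theory_of J \<pi> J0 \<pi>0" and wf: "wf_fml \<phi>" and fv: "ffv \<phi> \<subseteq> {0,1}"
    and H0: "\<forall>a0. feval J0 \<pi>0 a0 \<phi> = 0"
  shows "feval J \<pi> a \<phi> = 0"
proof -
  define r where "r = nat \<lceil>max (norm (a 0)) (norm (a 1))\<rceil>"
  define f :: "real \<Rightarrow> real" where "f = (\<lambda>t. min 1 \<bar>t\<bar>)"
  define \<psi> where "\<psi> = SupB 0 r (SupB 1 r (Conn1 f \<phi>))"
  have cf: "continuous_on UNIV f" unfolding f_def by (intro continuous_intros)
  have sen: "sentence \<psi>" using wf fv cf by (auto simp: sentence_def \<psi>_def)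
  have ne: "cball (0::'x::real_normed_vector) (real r) \<noteq> {}" by simp
  have "\<forall>a0. feval J0 \<pi>0 a0 \<psi> = 0"
    using H0 by (simp add: \<psi>_def f_def)
  then have z: "feval J \<pi> a \<psi> = 0" using M sen by (auto simp: models_theory_of_def)
  define G where "G = (\<lambda>x y. f (feval J \<pi> (a(0 := x, 1 := y)) \<phi>))"
  have G01: "0 \<le> G x y" "G x y \<le> 1" for x y by (auto simp: G_def f_def)
  have in0: "a 0 \<in> cball 0 (real r)" "a 1 \<in> cball 0 (real r)"
    using real_nat_ceiling_ge[of "max (norm (a 0)) (norm (a 1))"] by (auto simp: r_def)
  have "G (a 0) (a 1) \<le> (SUP y\<in>cball 0 (real r). G (a 0) y)"
    using in0 G01 by (intro cSUP_upper bdd_aboveI2[where M=1]) auto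
  also have "\<dots> \<le> (SUP x\<in>cball 0 (real r). SUP y\<in>cball 0 (real r). G x y)"
    using in0 G01 ne by (intro cSUP_upper bdd_aboveI2[where M=1] cSUP_least) auto
  also have "\<dots> = 0" using z by (simp add: \<psi>_def G_def)
  finally have "G (a 0) (a 1) \<le> 0" .
  then show ?thesis by (simp add: G_def f_def)
qed



lemma goodrep_from:
  fixes J0 :: "'a::real_inner \<Rightarrow> 'a" and \<pi>0 :: "'g::group_add \<Rightarrow> 'a \<Rightarrow> 'a"
    and J :: "'b::real_inner \<Rightarrow> 'b" and \<pi> :: "'g \<Rightarrow> 'b \<Rightarrow> 'b"
  assumes M: "models_theory_of J \<pi> J0 \<pi>0" and U: "unitary_rep J0 \<pi>0" and cs: "complex_structure J"
  shows "goodrep J \<pi>"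
proof -
  have U0: "\<pi>0 0 = id" and Uh: "\<And>a b. \<pi>0 (a + b) = \<pi>0 a \<circ> \<pi>0 b" and Ul: "\<And>h. linear (\<pi>0 h)"
    and Uj: "\<And>h x. \<pi>0 h (J0 x) = J0 (\<pi>0 h x)" and Un: "\<And>h x. norm (\<pi>0 h x) = norm x"
    using U by (auto simp: unitary_rep_def)
  have cm: "continuous_on UNIV (\<lambda>p::real\<times>real. fst p - snd p)" by (intro continuous_intros)
  define asg :: "'b \<Rightarrow> 'b \<Rightarrow> nat \<Rightarrow> 'b" where "asg x y = (\<lambda>_. x)(1 := y)" for x y
  have asg: "asg x y 0 = x" "asg x y 1 = y" "asg x y (Suc 0) = y" for x y by (auto simp: asg_def)
  have E1: "norm (\<pi> h x) = norm x" for h x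
  proof -
    have "feval J \<pi> (asg x x) (Conn2 (\<lambda>u v. u - v) (Dist (Act h (Var 0)) Zero) (Dist (Var 0) Zero)) = 0"
      by (rule transfer[OF M]) (use cm Un in \<open>auto simp: dist_norm\<close>)
    then show ?thesis by (simp add: asg dist_norm)
  qed
  have E2: "dist (\<pi> h x) (\<pi> h y) = dist x y" for h x y
  proof -
    have "feval J \<pi> (asg x y) (Conn2 (\<lambda>u v. u - v) (Dist (Act h (Var 0)) (Act h (Var 1))) (Dist (Var 0) (Var 1))) = 0"
      by (rule transfer[OF M]) (use cm Un Ul in \<open>auto simp: dist_norm linear_diff[symmetric]\<close>)
    then show ?thesis by (simp add: asg)
  qed
  have E3: "\<pi> (h + k) x = \<pi> h (\<pi> k x)" for h k x
  proof -
    have "feval J \<pi> (asg x x) (Dist (Act (h + k) (Var 0)) (Act h (Act k (Var 0)))) = 0"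
      by (rule transfer[OF M]) (use Uh in auto)
    then show ?thesis by (simp add: asg)
  qed
  have E4: "\<pi> 0 x = x" for x
  proof -
    have "feval J \<pi> (asg x x) (Dist (Act 0 (Var 0)) (Var 0)) = 0"
      by (rule transfer[OF M]) (use U0 in auto)
    then show ?thesis by (simp add: asg)
  qed
  have E5: "\<pi> h (J x) = J (\<pi> h x)" for h x
  proof -
    have "feval J \<pi> (asg x x) (Dist (Act h (Rot (1/4) (Var 0))) (Rot (1/4) (Act h (Var 0)))) = 0"
      by (rule transfer[OF M]) (use Uj in \<open>auto simp: rot_quarter\<close>)
    then show ?thesis by (simp add: asg rot_quarter)
  qed
  have ip: "inner (\<pi> h x) (\<pi> h y) = inner x y" for h x y
    using E1 E2 unfolding dot_norm_neg[of "\<pi> h x"] dot_norm_neg[of x] dist_norm by simp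
  show ?thesis using cs ip E3 E4 E5 by unfold_locales auto
qed

theorem mainTheorem18:
  fixes g :: "nat \<Rightarrow> 'g::{group_add, countable}"
    and J0 :: "'a::{real_inner, complete_space} \<Rightarrow> 'a" and \<pi>0 :: "'g \<Rightarrow> 'a \<Rightarrow> 'a"
    and J :: "'b::{real_inner, complete_space} \<Rightarrow> 'b" and \<pi> :: "'g \<Rightarrow> 'b \<Rightarrow> 'b"
    and T :: "'b \<Rightarrow> 'b"
  assumes "infinite (UNIV :: 'g set)"
    and "bij g"
    and "complex_structure J0"
    and "infinite_dimensional TYPE('a)"
    and "unitary_rep J0 \<pi>0"
    and "complex_structure J"
    and "models_theory_of J \<pi> J0 \<pi>0"
    and "T \<in> cstar_alg J (\<lambda>n. \<pi> (g n))"
  shows "definable_fun J \<pi> T"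
proof -
  interpret goodrep J \<pi> using goodrep_from assms(5-7) by blast
  have blT: "bounded_linear T"
    and apx: "\<And>\<epsilon>. \<epsilon> > 0 \<Longrightarrow> \<exists>S\<in>star_alg J (\<lambda>n. \<pi> (g n)). onorm (\<lambda>x. T x - S x) < \<epsilon>"
    using assms(8) by (auto simp: cstar_alg_def)
  show ?thesis unfolding definable_fun_def
  proof
    fix r :: nat
    define s where "s = nat \<lceil>onorm T * real r\<rceil>"
    have img: "T ` cball 0 (real r) \<subseteq> cball 0 (real s)"
    proof
      fix z assume "z \<in> T ` cball 0 (real r)"
      then obtain x where x: "norm x \<le> real r" "z = T x" by auto
      have "norm (T x) \<le> onorm T * norm x" by (rule onorm[OF blT])
      also have "\<dots> \<le> onorm T * real r" using x onorm_pos_le[OF blT] by (intro mult_left_mono) auto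
      also have "\<dots> \<le> real s" unfolding s_def by (rule real_nat_ceiling_ge)
      finally show "z \<in> cball 0 (real s)" using x by simp
    qed
    have "\<forall>\<epsilon>>0. \<exists>\<phi>. wf_fml \<phi> \<and> ffv \<phi> \<subseteq> {0, 1} \<and>
           (\<forall>x\<in>cball 0 (real r). \<forall>y\<in>cball 0 (real s). \<forall>a.
              \<bar>feval J \<pi> (a(0 := x, 1 := y)) \<phi> - dist (T x) y\<bar> < \<epsilon>)"
    proof (intro allI impI)
      fix \<epsilon> :: real assume e: "\<epsilon> > 0"
      obtain S where S: "S \<in> star_alg J (\<lambda>n. \<pi> (g n))" "onorm (\<lambda>x. T x - S x) < \<epsilon> / (2 * (real r + 1))"
        using apx[of "\<epsilon> / (2 * (real r + 1))"] e by auto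
      obtain L where L: "S = ev L" using star_ev[OF S(1)] by blast
      have bl: "bounded_linear (\<lambda>x. T x - S x)" using blT ev_bl L by (intro bounded_linear_sub) auto
      obtain t where t: "tfv t \<subseteq> {0}" "\<And>A. norm (A 0) \<le> real r \<Longrightarrow> norm (ev L (A 0) - teval J \<pi> A t) < \<epsilon>/2"
        using term_approx[of "\<epsilon>/2" "real r" L] e by auto
      show "\<exists>\<phi>. wf_fml \<phi> \<and> ffv \<phi> \<subseteq> {0, 1} \<and>
           (\<forall>x\<in>cball 0 (real r). \<forall>y\<in>cball 0 (real s). \<forall>a.
              \<bar>feval J \<pi> (a(0 := x, 1 := y)) \<phi> - dist (T x) y\<bar> < \<epsilon>)"
      proof (intro exI[of _ "Dist t (Var 1)"] conjI ballI allI)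
        show "wf_fml (Dist t (Var 1))" by simp
        show "ffv (Dist t (Var 1)) \<subseteq> {0, 1}" using t(1) by auto
      next
        fix x y :: 'b and a :: "nat \<Rightarrow> 'b" assume x: "x \<in> cball 0 (real r)"
        define A where "A = a(0 := x, 1 := y)"
        have A0: "A 0 = x" "A 1 = y" unfolding A_def by simp_all
        have nx: "norm x \<le> real r" using x by simp
        have "norm (T x - S x) \<le> onorm (\<lambda>x. T x - S x) * norm x" using onorm[OF bl] by simp
        also have "\<dots> \<le> \<epsilon> / (2 * (real r + 1)) * real r"
          using S(2) nx onorm_pos_le[OF bl] by (intro mult_mono) auto
        also have "\<dots> < \<epsilon> / 2" using e by (simp add: field_simps)
        finally have n1: "norm (T x - S x) < \<epsilon> / 2" .
        have n2: "norm (S x - teval J \<pi> A t) < \<epsilon>/2" using t(2)[of A] A0 nx L by simp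
        have "\<bar>dist (teval J \<pi> A t) y - dist (T x) y\<bar> \<le> dist (teval J \<pi> A t) (T x)"
          using abs_dist_diff_le[of "teval J \<pi> A t" y "T x"] dist_commute[of y "T x"] by simp
        also have "\<dots> = norm ((T x - S x) + (S x - teval J \<pi> A t))"
          by (simp add: dist_norm norm_minus_commute)
        also have "\<dots> \<le> norm (T x - S x) + norm (S x - teval J \<pi> A t)"
          by (rule norm_triangle_ineq)
        finally have tri: "\<bar>dist (teval J \<pi> A t) y - dist (T x) y\<bar> \<le> norm (T x - S x) + norm (S x - teval J \<pi> A t)" .
        show "\<bar>feval J \<pi> (a(0 := x, 1 := y)) (Dist t (Var 1)) - dist (T x) y\<bar> < \<epsilon>"
        proof -
          have "feval J \<pi> (a(0 := x, 1 := y)) (Dist t (Var 1)) = dist (teval J \<pi> A t) y"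
            by (simp add: A_def)
          then show ?thesis using tri n1 n2 by linarith
        qed
      qed
    qed
    then show "\<exists>s::nat. T ` cball 0 (real r) \<subseteq> cball 0 (real s) \<and>
        (\<forall>\<epsilon>>0. \<exists>\<phi>. wf_fml \<phi> \<and> ffv \<phi> \<subseteq> {0, 1} \<and>
           (\<forall>x\<in>cball 0 (real r). \<forall>y\<in>cball 0 (real s). \<forall>a.
              \<bar>feval J \<pi> (a(0 := x, 1 := y)) \<phi> - dist (T x) y\<bar> < \<epsilon>))"
      using img by blast
  qed
qed

end
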